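(* Let $s_n$ ($n\ge1$) be the number of saturated secondary structures on $[1,n]$ and $S(z)=\sum_{n\ge1}s_nz^n$. Then $S(z)$ satisfies the algebraic equation $$-S^3z^4+z(1+z)-S^2z^2(z^2-2)+S(z^2-1)=0 .$$
   Context: A secondary structure on $[1,n]$ (with minimum hairpin size $\theta=1$) is a set $S$ of pairs $(i,j)$ of integers with $1\le i<j\le n$ such that: (i) there are no $(i,j),(k,\ell)\in S$ with $i<k<j<\ell$; (ii) every position of $[1,n]$ belongs to at most one pair of $S$; (iii) $j-i>1$ for every $(i,j)\in S$. Any position may pair with any other. A secondary structure $S$ on $[1,n]$ is saturated if there is no pair $(i,j)\notin S$ with $1\le i<j\le n$ such that $S\cup\{(i,j)\}$ is again a secondary structure on $[1,n]$. *)

theory Defs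
  imports "HOL-Computational_Algebra.Formal_Power_Series"
begin

text \<open>Secondary structures on [1,n] with minimum hairpin size 1.\<close>
definition secondary_structure :: "nat \<Rightarrow> (nat \<times> nat) set \<Rightarrow> bool" where
  "secondary_structure n S \<longleftrightarrow>
     (\<forall>(i, j) \<in> S. 1 \<le> i \<and> i < j \<and> j \<le> n) \<and>
     (\<nexists>i j k l. (i, j) \<in> S \<and> (k, l) \<in> S \<and> i < k \<and> k < j \<and> j < l) \<and>
     (\<forall>p \<in> S. \<forall>q \<in> S. p \<noteq> q \<longrightarrow> {fst p, snd p} \<inter> {fst q, snd q} = {}) \<and>
     (\<forall>(i, j) \<in> S. j - i > 1)"

definition saturated :: "nat \<Rightarrow> (nat \<times> nat) set \<Rightarrow> bool" where
  "saturated n S \<longleftrightarrow> secondary_structure n S \<and>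
     \<not> (\<exists>i j. 1 \<le> i \<and> i < j \<and> j \<le> n \<and> (i, j) \<notin> S \<and>
             secondary_structure n (insert (i, j) S))"

definition num_saturated :: "nat \<Rightarrow> nat" where
  "num_saturated n = card {S. saturated n S}"

definition sat_gf :: "int fps" where
  "sat_gf = Abs_fps (\<lambda>n. if n = 0 then 0 else int (num_saturated n))"

end

theory Submission
  imports Defs
begin

unbundle fps_syntax


definition ss :: "nat \<Rightarrow> nat \<Rightarrow> (nat \<times> nat) set \<Rightarrow> bool" where
 "ss a n S \<longleftrightarrow> (\<forall>(i,j)\<in>S. a \<le> i \<and> i<j \<and> j < a+n) \<and>
     (\<nexists>i j k l. (i, j) \<in> S \<and> (k, l) \<in> S \<and> i < k \<and> k < j \<and> j < l) \<and>
     (\<forall>p \<in> S. \<forall>q \<in> S. p \<noteq> q \<longrightarrow> {fst p, snd p} \<inter> {fst q, snd q} = {}) \<and>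
     (\<forall>(i, j) \<in> S. j - i > 1)"

definition freeS :: "(nat \<times> nat) set \<Rightarrow> nat \<Rightarrow> bool" where
 "freeS S x \<longleftrightarrow> (\<forall>(p,q)\<in>S. p \<noteq> x \<and> q \<noteq> x)"

definition conf :: "(nat \<times> nat) set \<Rightarrow> nat \<Rightarrow> nat \<Rightarrow> bool" where
 "conf S i k \<longleftrightarrow> (\<exists>(p,q)\<in>S. (p<i \<and> i<q \<and> q<k) \<or> (i<p \<and> p<k \<and> k<q))"

definition sat :: "nat \<Rightarrow> nat \<Rightarrow> (nat \<times> nat) set \<Rightarrow> bool" where
 "sat a n S \<longleftrightarrow> ss a n S \<and> \<not> (\<exists>i j. a \<le> i \<and> i < j \<and> j < a+n \<and> (i, j) \<notin> S \<and>
             ss a n (insert (i, j) S))"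

lemma freeD: "freeS S x \<Longrightarrow> (p,q)\<in>S \<Longrightarrow> p \<noteq> x \<and> q \<noteq> x"
  unfolding freeS_def by blast

lemma freeI: "(\<And>p q. (p,q)\<in>S \<Longrightarrow> p \<noteq> x \<and> q \<noteq> x) \<Longrightarrow> freeS S x"
  unfolding freeS_def by blast

lemma confI: "(p,q)\<in>S \<Longrightarrow> (p<i \<and> i<q \<and> q<k) \<or> (i<p \<and> p<k \<and> k<q) \<Longrightarrow> conf S i k"
  unfolding conf_def by blast

lemma confE: "conf S i k \<Longrightarrow> (\<And>p q. (p,q)\<in>S \<Longrightarrow> (p<i \<and> i<q \<and> q<k) \<or> (i<p \<and> p<k \<and> k<q) \<Longrightarrow> P) \<Longrightarrow> P"
  unfolding conf_def by blast

lemma ss_p1: assumes "ss a n S" shows "\<forall>(i,j)\<in>S. a \<le> i \<and> i<j \<and> j < a+n"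
  using assms unfolding ss_def by (rule conjunct1)
lemma ss_p2: assumes "ss a n S" shows "\<nexists>i j k l. (i, j) \<in> S \<and> (k, l) \<in> S \<and> i < k \<and> k < j \<and> j < l"
  using assms unfolding ss_def by (rule conjunct1[OF conjunct2])
lemma ss_p3: assumes "ss a n S" shows "\<forall>p \<in> S. \<forall>q \<in> S. p \<noteq> q \<longrightarrow> {fst p, snd p} \<inter> {fst q, snd q} = {}"
  using assms unfolding ss_def by (rule conjunct1[OF conjunct2[OF conjunct2]])
lemma ss_p4: assumes "ss a n S" shows "\<forall>(i, j) \<in> S. j - i > 1"
  using assms unfolding ss_def by (rule conjunct2[OF conjunct2[OF conjunct2]])
lemmas ss_parts = ss_p1 ss_p2 ss_p3 ss_p4

lemma ssD: assumes "ss a n S" "(i,j)\<in>S" shows "a \<le> i \<and> i+1<j \<and> j<a+n"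
proof -
  have h1: "a \<le> i \<and> i<j \<and> j<a+n" using ss_parts(1)[OF assms(1)] assms(2) by auto
  have "1 < j - i" using ss_parts(4)[OF assms(1)] assms(2) by auto
  then show ?thesis using h1 by linarith
qed

lemma ss_disj: assumes "ss a n S" "(i,j)\<in>S" "(k,l)\<in>S" "(i,j)\<noteq>(k,l)" shows "i\<noteq>k \<and> i\<noteq>l \<and> j\<noteq>k \<and> j\<noteq>l"
proof -
  have "{fst (i,j), snd (i,j)} \<inter> {fst (k,l), snd (k,l)} = {}"
    using ss_parts(3)[OF assms(1)] assms(2-4) by blast
  then show ?thesis by auto
qed

lemma ss_nc: "ss a n S \<Longrightarrow> (i,j)\<in>S \<Longrightarrow> (k,l)\<in>S \<Longrightarrow> \<not>(i<k \<and> k<j \<and> j<l)"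
  using ss_parts(2) by blast

lemma ssI:
  assumes "\<And>i j. (i,j)\<in>S \<Longrightarrow> a \<le> i \<and> i+1<j \<and> j<a+n"
    "\<And>i j k l. (i,j)\<in>S \<Longrightarrow> (k,l)\<in>S \<Longrightarrow> (i,j)\<noteq>(k,l) \<Longrightarrow> i\<noteq>k \<and> i\<noteq>l \<and> j\<noteq>k \<and> j\<noteq>l"
    "\<And>i j k l. (i,j)\<in>S \<Longrightarrow> (k,l)\<in>S \<Longrightarrow> \<not>(i<k \<and> k<j \<and> j<l)"
  shows "ss a n S"
  unfolding ss_def
proof (intro conjI)
  show "\<forall>(i,j)\<in>S. a \<le> i \<and> i<j \<and> j < a+n" using assms(1) by fastforce
  show "\<nexists>i j k l. (i, j) \<in> S \<and> (k, l) \<in> S \<and> i < k \<and> k < j \<and> j < l" using assms(3) by blast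
  show "\<forall>(i, j) \<in> S. j - i > 1" using assms(1) by fastforce
  show "\<forall>p \<in> S. \<forall>q \<in> S. p \<noteq> q \<longrightarrow> {fst p, snd p} \<inter> {fst q, snd q} = {}"
  proof (intro ballI impI)
    fix p q assume "p\<in>S" "q\<in>S" "p\<noteq>q"
    then show "{fst p, snd p} \<inter> {fst q, snd q} = {}"
      using assms(2)[of "fst p" "snd p" "fst q" "snd q"] by auto
  qed
qed

lemma ss_insert:
  assumes "ss a n S" "a \<le> i" "i < k" "k < a+n" "(i,k)\<notin>S"
  shows "ss a n (insert (i,k) S) \<longleftrightarrow> (i+1<k \<and> freeS S i \<and> freeS S k \<and> \<not> conf S i k)"
proof
  assume h: "ss a n (insert (i,k) S)"
  have "i+1<k" using ssD[OF h, of i k] by auto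
  moreover have fr: "p \<noteq> i \<and> q \<noteq> i \<and> p \<noteq> k \<and> q \<noteq> k" if "(p,q)\<in>S" for p q
    using ss_disj[OF h, of i k p q] that assms(5) by auto
  moreover have "\<not> conf S i k"
  proof
    assume "conf S i k"
    then obtain p q where "(p,q)\<in>S" "(p<i \<and> i<q \<and> q<k) \<or> (i<p \<and> p<k \<and> k<q)" by (rule confE)
    then show False using ss_nc[OF h, of p q i k] ss_nc[OF h, of i k p q] by auto
  qed
  ultimately show "i+1<k \<and> freeS S i \<and> freeS S k \<and> \<not> conf S i k" by (auto intro: freeI)
next
  assume h: "i+1<k \<and> freeS S i \<and> freeS S k \<and> \<not> conf S i k"
  show "ss a n (insert (i,k) S)"
  proof (rule ssI)
    fix p q assume "(p,q) \<in> insert (i,k) S" then show "a \<le> p \<and> p+1<q \<and> q<a+n"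
      using ssD[OF assms(1), of p q] h assms by auto
  next
    fix p q r s assume A: "(p,q) \<in> insert (i,k) S" "(r,s) \<in> insert (i,k) S" "(p,q)\<noteq>(r,s)"
    show "p\<noteq>r \<and> p\<noteq>s \<and> q\<noteq>r \<and> q\<noteq>s"
    proof (cases "(p,q) = (i,k)")
      case True
      then have "(r,s)\<in>S" using A by auto
      then show ?thesis using True freeD[of S i r s] freeD[of S k r s] h by auto
    next
      case F1: False
      then have pq: "(p,q)\<in>S" using A by auto
      show ?thesis
      proof (cases "(r,s) = (i,k)")
        case True
        then show ?thesis using pq freeD[of S i p q] freeD[of S k p q] h by auto
      next
        case False
        then have "(r,s)\<in>S" using A by auto
        then show ?thesis using pq ss_disj[OF assms(1), of p q r s] A(3) by auto
      qed
    qed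
  next
    fix p q r s assume A: "(p,q) \<in> insert (i,k) S" "(r,s) \<in> insert (i,k) S"
    show "\<not>(p<r \<and> r<q \<and> q<s)"
    proof (cases "(p,q) = (i,k)")
      case True
      show ?thesis
      proof (cases "(r,s) = (i,k)")
        case False
        then have "(r,s)\<in>S" using A by auto
        then show ?thesis using True h confI[of r s S i k] by auto
      qed (use True in auto)
    next
      case F1: False
      then have pq: "(p,q)\<in>S" using A by auto
      show ?thesis
      proof (cases "(r,s) = (i,k)")
        case True
        then show ?thesis using pq h confI[of p q S i k] by auto
      next
        case False
        then have "(r,s)\<in>S" using A by auto
        then show ?thesis using pq ss_nc[OF assms(1), of p q r s] by auto
      qed
    qed
  qed
qed

lemma sat_iff: "sat a n S \<longleftrightarrow> ss a n S \<and> (\<forall>i k. a \<le> i \<longrightarrow> i+1<k \<longrightarrow> k<a+n \<longrightarrow> freeS S i \<longrightarrow> freeS S k \<longrightarrow> conf S i k)"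
proof
  assume h: "sat a n S"
  hence s: "ss a n S" by (simp add: sat_def)
  show "ss a n S \<and> (\<forall>i k. a \<le> i \<longrightarrow> i+1<k \<longrightarrow> k<a+n \<longrightarrow> freeS S i \<longrightarrow> freeS S k \<longrightarrow> conf S i k)"
  proof (intro conjI allI impI s)
    fix i k assume "a \<le> i" "i+1<k" "k<a+n" "freeS S i" "freeS S k"
    moreover have "(i,k)\<notin>S" using \<open>freeS S i\<close> freeD by blast
    moreover have "\<not> (a \<le> i \<and> i<k \<and> k<a+n \<and> (i,k)\<notin>S \<and> ss a n (insert (i,k) S))"
      using h unfolding sat_def by blast
    ultimately have "\<not> ss a n (insert (i,k) S)" by auto
    then show "conf S i k" using \<open>a \<le> i\<close> \<open>i+1<k\<close> \<open>k<a+n\<close> \<open>freeS S i\<close> \<open>freeS S k\<close> \<open>(i,k)\<notin>S\<close> ss_insert[OF s, of i k] by auto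
  qed
next
  assume h: "ss a n S \<and> (\<forall>i k. a \<le> i \<longrightarrow> i+1<k \<longrightarrow> k<a+n \<longrightarrow> freeS S i \<longrightarrow> freeS S k \<longrightarrow> conf S i k)"
  have "\<not> ss a n (insert (i,k) S)" if "a \<le> i" "i < k" "k < a+n" "(i,k)\<notin>S" for i k
    using ss_insert[of a n S i k] h that by auto
  then show "sat a n S" unfolding sat_def using h by blast
qed

lemma sec_ss: "secondary_structure n S = ss 1 n S"
  unfolding secondary_structure_def ss_def by (auto simp: Suc_le_eq less_Suc_eq_le)

lemma saturated_sat: "saturated n S = sat 1 n S"
  unfolding saturated_def sat_def sec_ss by (auto simp: less_Suc_eq_le)



definition cov :: "(nat \<times> nat) set \<Rightarrow> nat \<Rightarrow> bool" where
 "cov S x \<longleftrightarrow> (\<exists>(p,q)\<in>S. p<x \<and> x<q)"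

definition noext :: "nat \<Rightarrow> nat \<Rightarrow> (nat \<times> nat) set \<Rightarrow> bool" where
 "noext a n S \<longleftrightarrow> (\<forall>x. a \<le> x \<longrightarrow> x < a+n \<longrightarrow> \<not> freeS S x \<or> cov S x)"

definition zs :: "nat \<Rightarrow> nat \<Rightarrow> (nat \<times> nat) set \<Rightarrow> bool" where
 "zs a n S \<longleftrightarrow> sat a n S \<and> noext a n S"

lemma ss_shrink: assumes "ss a n S" "\<And>p q. (p,q)\<in>S \<Longrightarrow> a' \<le> p \<and> q < a'+n'" shows "ss a' n' S"
proof (rule ssI)
  fix i j assume "(i,j)\<in>S" then show "a' \<le> i \<and> i+1<j \<and> j<a'+n'" using ssD[OF assms(1)] assms(2) by blast
next
  fix i j k l assume "(i,j)\<in>S" "(k,l)\<in>S" "(i,j)\<noteq>(k,l)" then show "i\<noteq>k \<and> i\<noteq>l \<and> j\<noteq>k \<and> j\<noteq>l"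
    using ss_disj[OF assms(1)] by blast
next
  fix i j k l assume "(i,j)\<in>S" "(k,l)\<in>S" then show "\<not>(i<k \<and> k<j \<and> j<l)"
    using ss_nc[OF assms(1)] by blast
qed

lemma ss_subset: assumes "ss a n S" "T \<subseteq> S" shows "ss a n T"
proof (rule ssI)
  fix i j assume "(i,j)\<in>T" then show "a \<le> i \<and> i+1<j \<and> j<a+n" using ssD[OF assms(1)] assms(2) by blast
next
  fix i j k l assume "(i,j)\<in>T" "(k,l)\<in>T" "(i,j)\<noteq>(k,l)" then show "i\<noteq>k \<and> i\<noteq>l \<and> j\<noteq>k \<and> j\<noteq>l"
    using ss_disj[OF assms(1)] assms(2) by blast
next
  fix i j k l assume "(i,j)\<in>T" "(k,l)\<in>T" then show "\<not>(i<k \<and> k<j \<and> j<l)"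
    using ss_nc[OF assms(1)] assms(2) by blast
qed

lemma sat_ss: "sat a n S \<Longrightarrow> ss a n S" by (simp add: sat_iff)

lemma satD: "sat a n S \<Longrightarrow> a \<le> i \<Longrightarrow> i+1<k \<Longrightarrow> k<a+n \<Longrightarrow> freeS S i \<Longrightarrow> freeS S k \<Longrightarrow> conf S i k"
  by (simp add: sat_iff)

lemma satI: "ss a n S \<Longrightarrow> (\<And>i k. a \<le> i \<Longrightarrow> i+1<k \<Longrightarrow> k<a+n \<Longrightarrow> freeS S i \<Longrightarrow> freeS S k \<Longrightarrow> conf S i k) \<Longrightarrow> sat a n S"
  by (simp add: sat_iff)

lemma covE: "cov S x \<Longrightarrow> (\<And>p q. (p,q)\<in>S \<Longrightarrow> p<x \<Longrightarrow> x<q \<Longrightarrow> P) \<Longrightarrow> P"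
  unfolding cov_def by blast

lemma covI: "(p,q)\<in>S \<Longrightarrow> p<x \<Longrightarrow> x<q \<Longrightarrow> cov S x"
  unfolding cov_def by blast

lemma noextD: "noext a n S \<Longrightarrow> a \<le> x \<Longrightarrow> x < a+n \<Longrightarrow> freeS S x \<Longrightarrow> cov S x"
  unfolding noext_def by blast

lemma noextI: "(\<And>x. a \<le> x \<Longrightarrow> x < a+n \<Longrightarrow> freeS S x \<Longrightarrow> cov S x) \<Longrightarrow> noext a n S"
  unfolding noext_def by blast

lemma freeA:
  assumes "2 \<le> n"
  shows "(sat a n S \<and> freeS S a \<and> \<not> freeS S (a+1)) \<longleftrightarrow> zs (a+1) (n-1) S"
proof
  assume h: "sat a n S \<and> freeS S a \<and> \<not> freeS S (a+1)"
  have s: "ss a n S" using h sat_ss by blast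
  have r: "a+1 \<le> p \<and> q < a+1+(n-1)" if "(p,q)\<in>S" for p q
    using ssD[OF s that] freeD[of S a p q] h that assms by auto
  have s1: "ss (a+1) (n-1) S" using ss_shrink[OF s r] by blast
  have "sat (a+1) (n-1) S"
  proof (rule satI[OF s1])
    fix i k assume "a+1 \<le> i" "i+1<k" "k<a+1+(n-1)" "freeS S i" "freeS S k"
    then show "conf S i k" using satD[of a n S i k] h assms by auto
  qed
  moreover have "noext (a+1) (n-1) S"
  proof (rule noextI)
    fix x assume x: "a+1 \<le> x" "x < a+1+(n-1)" "freeS S x"
    then have "x \<noteq> a+1" using h by auto
    then have "conf S a x" using satD[of a n S a x] h x assms by auto
    then obtain p q where pq: "(p,q)\<in>S" "(p<a \<and> a<q \<and> q<x) \<or> (a<p \<and> p<x \<and> x<q)" by (rule confE)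
    then show "cov S x" using ssD[OF s pq(1)] covI[OF pq(1)] by auto
  qed
  ultimately show "zs (a+1) (n-1) S" by (simp add: zs_def)
next
  assume h: "zs (a+1) (n-1) S"
  have s1: "ss (a+1) (n-1) S" using h sat_ss zs_def by blast
  have s: "ss a n S" using ss_shrink[OF s1, of a n] ssD[OF s1] assms by force
  have fa: "freeS S a" using ssD[OF s1] by (intro freeI) force
  have nfa: "\<not> freeS S (a+1)"
  proof
    assume "freeS S (a+1)"
    then have "cov S (a+1)" using h assms noextD[of "a+1" "n-1" S "a+1"] unfolding zs_def by auto
    then obtain p q where "(p,q)\<in>S" "p < a+1" by (rule covE)
    then show False using ssD[OF s1] by force
  qed
  have "sat a n S"
  proof (rule satI[OF s])
    fix i k assume ik: "a \<le> i" "i+1<k" "k<a+n" "freeS S i" "freeS S k"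
    show "conf S i k"
    proof (cases "a+1 \<le> i")
      case True
      then show ?thesis using satD[of "a+1" "n-1" S i k] h ik assms unfolding zs_def by auto
    next
      case False
      then have "i = a" using ik by auto
      have "cov S k" using h ik assms noextD[of "a+1" "n-1" S k] unfolding zs_def by auto
      then obtain p q where pq: "(p,q)\<in>S" "p<k" "k<q" by (rule covE)
      then show ?thesis using ssD[OF s1 pq(1)] \<open>i = a\<close> confI[OF pq(1), of i k] by auto
    qed
  qed
  then show "sat a n S \<and> freeS S a \<and> \<not> freeS S (a+1)" using fa nfa by blast
qed

lemma freeB:
  assumes "2 \<le> n"
  shows "(sat a n S \<and> freeS S a \<and> freeS S (a+1)) \<longleftrightarrow> zs (a+2) (n-2) S"
proof
  assume h: "sat a n S \<and> freeS S a \<and> freeS S (a+1)"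
  have s: "ss a n S" using h sat_ss by blast
  have r: "a+2 \<le> p \<and> q < a+2+(n-2)" if "(p,q)\<in>S" for p q
    using ssD[OF s that] freeD[of S a p q] freeD[of S "a+1" p q] h that assms by auto
  have s1: "ss (a+2) (n-2) S" using ss_shrink[OF s r] by blast
  have "sat (a+2) (n-2) S"
  proof (rule satI[OF s1])
    fix i k assume "a+2 \<le> i" "i+1<k" "k<a+2+(n-2)" "freeS S i" "freeS S k"
    then show "conf S i k" using satD[of a n S i k] h assms by auto
  qed
  moreover have "noext (a+2) (n-2) S"
  proof (rule noextI)
    fix x assume x: "a+2 \<le> x" "x < a+2+(n-2)" "freeS S x"
    then have "conf S a x" using satD[of a n S a x] h x assms by auto
    then obtain p q where pq: "(p,q)\<in>S" "(p<a \<and> a<q \<and> q<x) \<or> (a<p \<and> p<x \<and> x<q)" by (rule confE)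
    then show "cov S x" using ssD[OF s pq(1)] covI[OF pq(1)] by auto
  qed
  ultimately show "zs (a+2) (n-2) S" by (simp add: zs_def)
next
  assume h: "zs (a+2) (n-2) S"
  have s1: "ss (a+2) (n-2) S" using h sat_ss zs_def by blast
  have s: "ss a n S" using ss_shrink[OF s1, of a n] ssD[OF s1] assms by force
  have fa: "freeS S a" "freeS S (a+1)" using ssD[OF s1] by (intro freeI; force)+
  have "sat a n S"
  proof (rule satI[OF s])
    fix i k assume ik: "a \<le> i" "i+1<k" "k<a+n" "freeS S i" "freeS S k"
    show "conf S i k"
    proof (cases "a+2 \<le> i")
      case True
      then show ?thesis using satD[of "a+2" "n-2" S i k] h ik assms unfolding zs_def by auto
    next
      case False
      have "cov S k" using h ik assms False noextD[of "a+2" "n-2" S k] unfolding zs_def by auto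
      then obtain p q where pq: "(p,q)\<in>S" "p<k" "k<q" by (rule covE)
      then show ?thesis using ssD[OF s1 pq(1)] False confI[OF pq(1), of i k] by auto
    qed
  qed
  then show "sat a n S \<and> freeS S a \<and> freeS S (a+1)" using fa by blast
qed



lemma free_mono: "freeS S x \<Longrightarrow> T \<subseteq> S \<Longrightarrow> freeS T x"
  unfolding freeS_def by blast

lemma conf_mono: "conf T i k \<Longrightarrow> T \<subseteq> S \<Longrightarrow> conf S i k"
  unfolding conf_def by blast

lemma decomp_fwd:
  assumes m: "1 \<le> m" "m+2 \<le> n" "j = a+m+1" and h: "sat a n S" "(a,j)\<in>S"
  defines "S1 \<equiv> {x\<in>S. a < fst x \<and> snd x < j}" and "S2 \<equiv> {x\<in>S. j < fst x}"
  shows "S = insert (a,j) (S1 \<union> S2)" "sat (a+1) m S1" "sat (j+1) (n-m-2) S2"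
proof -
  have s: "ss a n S" using h sat_ss by blast
  have other: "(a<p \<and> q<j) \<or> j<p" if "(p,q)\<in>S" "(p,q)\<noteq>(a,j)" for p q
  proof -
    have "a\<noteq>p \<and> a\<noteq>q \<and> j\<noteq>p \<and> j\<noteq>q" using ss_disj[OF s h(2) that(1)] that(2) by auto
    moreover have "a \<le> p \<and> p+1<q" using ssD[OF s that(1)] by auto
    moreover have "\<not>(a<p \<and> p<j \<and> j<q)" using ss_nc[OF s h(2) that(1)] .
    ultimately show ?thesis by linarith
  qed
  show eq: "S = insert (a,j) (S1 \<union> S2)"
  proof
    show "S \<subseteq> insert (a,j) (S1 \<union> S2)"
    proof
      fix x assume "x\<in>S"
      then show "x \<in> insert (a,j) (S1 \<union> S2)" using other[of "fst x" "snd x"] unfolding S1_def S2_def by auto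
    qed
    show "insert (a,j) (S1 \<union> S2) \<subseteq> S" using h(2) unfolding S1_def S2_def by auto
  qed
  have S1S: "S1 \<subseteq> S" and S2S: "S2 \<subseteq> S" unfolding S1_def S2_def by auto
  have b1: "a+1 \<le> p \<and> q < a+1+m" if "(p,q)\<in>S1" for p q
    using that m unfolding S1_def by auto
  have b2: "j+1 \<le> p \<and> q < j+1+(n-m-2)" if "(p,q)\<in>S2" for p q
    using that m ssD[OF s, of p q] unfolding S2_def by auto
  have s1: "ss (a+1) m S1" using ss_shrink[OF ss_subset[OF s S1S] b1] by blast
  have s2: "ss (j+1) (n-m-2) S2" using ss_shrink[OF ss_subset[OF s S2S] b2] by blast
  show "sat (a+1) m S1"
  proof (rule satI[OF s1])
    fix i k assume ik: "a+1 \<le> i" "i+1<k" "k<a+1+m" "freeS S1 i" "freeS S1 k"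
    have fr: "freeS S x" if "a+1 \<le> x" "x<j" "freeS S1 x" for x
    proof (rule freeI)
      fix p q assume pq: "(p,q)\<in>S"
      show "p \<noteq> x \<and> q \<noteq> x"
      proof (cases "(p,q) = (a,j)")
        case True then show ?thesis using that by auto
      next
        case False
        then have "(a<p \<and> q<j) \<or> j<p" using other pq by blast
        moreover have "p<q" using ssD[OF s pq] by auto
        moreover { assume "a<p \<and> q<j" then have "(p,q)\<in>S1" using pq unfolding S1_def by auto
          then have ?thesis using freeD[OF that(3)] by blast }
        ultimately show ?thesis using that by force
      qed
    qed
    have "conf S i k" using satD[OF h(1), of i k] ik fr[of i] fr[of k] m by auto
    then obtain p q where pq: "(p,q)\<in>S" "(p<i \<and> i<q \<and> q<k) \<or> (i<p \<and> p<k \<and> k<q)" by (rule confE)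
    show "conf S1 i k"
    proof (cases "(p,q) = (a,j)")
      case True then show ?thesis using pq ik m by auto
    next
      case False
      then have "(a<p \<and> q<j) \<or> j<p" using other pq by blast
      moreover { assume "a<p \<and> q<j" then have "(p,q)\<in>S1" using pq unfolding S1_def by auto
          then have ?thesis using confI pq(2) by blast }
      ultimately show ?thesis using pq ik m by force
    qed
  qed
  show "sat (j+1) (n-m-2) S2"
  proof (rule satI[OF s2])
    fix i k assume ik: "j+1 \<le> i" "i+1<k" "k<j+1+(n-m-2)" "freeS S2 i" "freeS S2 k"
    have fr: "freeS S x" if "j < x" "freeS S2 x" for x
    proof (rule freeI)
      fix p q assume pq: "(p,q)\<in>S"
      show "p \<noteq> x \<and> q \<noteq> x"
      proof (cases "(p,q) = (a,j)")
        case True then show ?thesis using that m by auto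
      next
        case False
        then have "(a<p \<and> q<j) \<or> j<p" using other pq by blast
        moreover { assume "j<p" then have "(p,q)\<in>S2" using pq unfolding S2_def by auto
          then have ?thesis using freeD[OF that(2)] by blast }
        ultimately show ?thesis using that by force
      qed
    qed
    have "conf S i k" using satD[OF h(1), of i k] ik fr[of i] fr[of k] m by auto
    then obtain p q where pq: "(p,q)\<in>S" "(p<i \<and> i<q \<and> q<k) \<or> (i<p \<and> p<k \<and> k<q)" by (rule confE)
    show "conf S2 i k"
    proof (cases "(p,q) = (a,j)")
      case True then show ?thesis using pq ik m by auto
    next
      case False
      then have "(a<p \<and> q<j) \<or> j<p" using other pq by blast
      moreover { assume "j<p" then have "(p,q)\<in>S2" using pq unfolding S2_def by auto
          then have ?thesis using confI pq(2) by blast }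
      ultimately show ?thesis using pq ik m by force
    qed
  qed
qed


lemma decomp_elem:
  assumes m: "1 \<le> m" "m+2 \<le> n" "j = a+m+1" and s1: "ss (a+1) m S1" and s2: "ss (j+1) (n-m-2) S2"
    and "(p,q) \<in> insert (a,j) (S1 \<union> S2)"
  shows "((p,q)=(a,j)) \<or> ((p,q)\<in>S1 \<and> a+1 \<le> p \<and> p+1<q \<and> q<j) \<or> ((p,q)\<in>S2 \<and> j+1 \<le> p \<and> p+1 < q \<and> q < a+n)"
  using assms ssD[OF s1, of p q] ssD[OF s2, of p q] by auto

lemma decomp_cases:
  assumes m: "1 \<le> m" "m+2 \<le> n" "j = a+m+1" and s1: "ss (a+1) m S1" and s2: "ss (j+1) (n-m-2) S2"
    and "(p,q) \<in> insert (a,j) (S1 \<union> S2)"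
  obtains (c0) "p = a" "q = j" | (c1) "(p,q)\<in>S1" "a+1 \<le> p" "p+1<q" "q<j" | (c2) "(p,q)\<in>S2" "j+1 \<le> p" "p+1 < q" "q < a+n"
  using decomp_elem[OF assms] by blast

lemma decomp_ss:
  assumes m: "1 \<le> m" "m+2 \<le> n" "j = a+m+1" and s1: "ss (a+1) m S1" and s2: "ss (j+1) (n-m-2) S2"
  shows "ss a n (insert (a,j) (S1 \<union> S2))"
proof -
  have jf: "a+1 < j" "j < a+n" using m by auto
  show ?thesis
proof (rule ssI)
  fix p q assume A: "(p,q) \<in> insert (a,j) (S1 \<union> S2)"
  show "a \<le> p \<and> p+1<q \<and> q<a+n" by (rule decomp_cases[OF m s1 s2 A]) (use jf in auto)
next
  fix p q r t assume A: "(p,q) \<in> insert (a,j) (S1 \<union> S2)" "(r,t) \<in> insert (a,j) (S1 \<union> S2)" "(p,q) \<noteq> (r,t)"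
  show "p\<noteq>r \<and> p\<noteq>t \<and> q\<noteq>r \<and> q\<noteq>t"
  proof (rule decomp_cases[OF m s1 s2 A(1)])
    assume c0: "p = a" "q = j"
    show ?thesis by (rule decomp_cases[OF m s1 s2 A(2)]) (use c0 jf A(3) in auto)
  next
    assume c1: "(p,q)\<in>S1" "a+1 \<le> p" "p+1<q" "q<j"
    show ?thesis
    proof (rule decomp_cases[OF m s1 s2 A(2)])
      assume "(r,t)\<in>S1"
      then show ?thesis using ss_disj[OF s1, of p q r t] c1(1) A(3) by blast
    qed (use c1 jf in auto)
  next
    assume c2: "(p,q)\<in>S2" "j+1 \<le> p" "p+1 < q" "q < a+n"
    show ?thesis
    proof (rule decomp_cases[OF m s1 s2 A(2)])
      assume "(r,t)\<in>S2"
      then show ?thesis using ss_disj[OF s2, of p q r t] c2(1) A(3) by blast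
    qed (use c2 jf in auto)
  qed
next
  fix p q r t assume A: "(p,q) \<in> insert (a,j) (S1 \<union> S2)" "(r,t) \<in> insert (a,j) (S1 \<union> S2)"
  show "\<not>(p<r \<and> r<q \<and> q<t)"
  proof (rule decomp_cases[OF m s1 s2 A(1)])
    assume c0: "p = a" "q = j"
    show ?thesis by (rule decomp_cases[OF m s1 s2 A(2)]) (use c0 jf in auto)
  next
    assume c1: "(p,q)\<in>S1" "a+1 \<le> p" "p+1<q" "q<j"
    show ?thesis
    proof (rule decomp_cases[OF m s1 s2 A(2)])
      assume "(r,t)\<in>S1"
      then show ?thesis using ss_nc[OF s1, of p q r t] c1(1) by blast
    qed (use c1 jf in auto)
  next
    assume c2: "(p,q)\<in>S2" "j+1 \<le> p" "p+1 < q" "q < a+n"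
    show ?thesis
    proof (rule decomp_cases[OF m s1 s2 A(2)])
      assume "(r,t)\<in>S2"
      then show ?thesis using ss_nc[OF s2, of p q r t] c2(1) by blast
    qed (use c2 jf in auto)
  qed
qed
qed

lemma decomp_bwd:
  assumes m: "1 \<le> m" "m+2 \<le> n" "j = a+m+1" and h1: "sat (a+1) m S1" and h2: "sat (j+1) (n-m-2) S2"
  shows "sat a n (insert (a,j) (S1 \<union> S2))"
proof -
  have s1: "ss (a+1) m S1" and s2: "ss (j+1) (n-m-2) S2" using h1 h2 sat_ss by blast+
  have jf: "a+1 < j" "j < a+n" "j+1+(n-m-2) = a+n" "a+1+m = j" using m by auto
  define S where "S = insert (a,j) (S1 \<union> S2)"
  have sub1: "S1 \<subseteq> S" and sub2: "S2 \<subseteq> S" and aj: "(a,j) \<in> S" unfolding S_def by auto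
  have "sat a n S"
  proof (rule satI)
    show "ss a n S" unfolding S_def by (rule decomp_ss[OF m s1 s2])
    fix i k assume ik: "a \<le> i" "i+1<k" "k<a+n" "freeS S i" "freeS S k"
    have ne: "i \<noteq> a" "i \<noteq> j" "k \<noteq> j" using freeD[OF ik(4) aj] freeD[OF ik(5) aj] by auto
    have f1: "freeS S1 i" "freeS S1 k" using free_mono[OF ik(4) sub1] free_mono[OF ik(5) sub1] .
    have f2: "freeS S2 i" "freeS S2 k" using free_mono[OF ik(4) sub2] free_mono[OF ik(5) sub2] .
    show "conf S i k"
    proof (cases "k < j")
      case True
      have "a+1 \<le> i" "k < a+1+m" using ik(1) ne(1) True jf by linarith+
      then have "conf S1 i k" using satD[OF h1 _ ik(2) _ f1] by blast
      then show ?thesis using conf_mono[OF _ sub1] by blast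
    next
      case False
      show ?thesis
      proof (cases "j < i")
        case True
        have "j+1 \<le> i" "k < j+1+(n-m-2)" using True ik(3) jf by linarith+
        then have "conf S2 i k" using satD[OF h2 _ ik(2) _ f2] by blast
        then show ?thesis using conf_mono[OF _ sub2] by blast
      next
        case F2: False
        have "a < i \<and> i < j \<and> j < k" using F2 False ne ik(1) by linarith
        then show ?thesis using confI[OF aj] by blast
      qed
    qed
  qed
  then show ?thesis unfolding S_def .
qed

lemma decomp_noext:
  assumes m: "1 \<le> m" "m+2 \<le> n" "j = a+m+1" and s1: "ss (a+1) m S1" and s2: "ss (j+1) (n-m-2) S2"
  shows "noext a n (insert (a,j) (S1 \<union> S2)) \<longleftrightarrow> noext (j+1) (n-m-2) S2"
proof -
  have jf: "a+1 < j" "j < a+n" "j+1+(n-m-2) = a+n" using m by auto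
  show ?thesis
proof
  let ?S = "insert (a,j) (S1 \<union> S2)"
  assume h: "noext a n ?S"
  show "noext (j+1) (n-m-2) S2"
  proof (rule noextI)
    fix x assume x: "j+1 \<le> x" "x < j+1+(n-m-2)" "freeS S2 x"
    have "freeS ?S x"
    proof (rule freeI)
      fix p q assume "(p,q)\<in>?S"
      then show "p \<noteq> x \<and> q \<noteq> x" using decomp_elem[OF m s1 s2, of p q] freeD[OF x(3), of p q] x jf by auto
    qed
    then have "cov ?S x" using noextD[OF h, of x] x m by auto
    then obtain p q where pq: "(p,q)\<in>?S" "p<x" "x<q" by (rule covE)
    then show "cov S2 x" using decomp_elem[OF m s1 s2 pq(1)] x jf covI[of p q S2 x] by auto
  qed
next
  let ?S = "insert (a,j) (S1 \<union> S2)"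
  assume h: "noext (j+1) (n-m-2) S2"
  show "noext a n ?S"
  proof (rule noextI)
    fix x assume x: "a \<le> x" "x < a+n" "freeS ?S x"
    have "x \<noteq> a" "x \<noteq> j" using freeD[OF x(3), of a j] by auto
    show "cov ?S x"
    proof (cases "x < j")
      case True
      then show ?thesis using covI[of a j ?S x] x \<open>x \<noteq> a\<close> by auto
    next
      case False
      then have "j+1 \<le> x" "x < j+1+(n-m-2)" using jf x \<open>x \<noteq> j\<close> by linarith+
      moreover have "freeS S2 x" using free_mono[OF x(3), of S2] by blast
      ultimately have "cov S2 x" using noextD[OF h, of x] by blast
      then show ?thesis unfolding cov_def by blast
    qed
  qed
qed
qed



definition Hc :: "nat \<Rightarrow> nat \<Rightarrow> nat" where "Hc a n = card {S. sat a n S}"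
definition Zc :: "nat \<Rightarrow> nat \<Rightarrow> nat" where "Zc a n = card {S. zs a n S}"

lemma fin_ss: "finite {S. ss a n S}"
proof (rule finite_subset)
  show "{S. ss a n S} \<subseteq> Pow ({a..<a+n} \<times> {a..<a+n})"
  proof
    fix S assume "S \<in> {S. ss a n S}"
    then have "ss a n S" by simp
    then have "x \<in> {a..<a+n} \<times> {a..<a+n}" if "x \<in> S" for x
      using ssD[of a n S "fst x" "snd x"] that by (cases x) auto
    then show "S \<in> Pow ({a..<a+n} \<times> {a..<a+n})" by blast
  qed
qed simp

lemma fin_sat: "finite {S. sat a n S}"
  by (rule finite_subset[OF _ fin_ss]) (auto simp: sat_iff)

lemma fin_sat2: "finite {S. sat a n S \<and> P S}"
  by (rule finite_subset[OF _ fin_sat]) auto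

lemma fin_zs: "finite {S. zs a n S}"
  by (rule finite_subset[OF _ fin_sat]) (auto simp: zs_def)

lemma recover:
  assumes "j = a+m+1" "ss (a+1) m S1" "ss (j+1) k S2"
  shows "S1 = {x\<in>insert (a,j) (S1 \<union> S2). a < fst x \<and> snd x < j}"
        "S2 = {x\<in>insert (a,j) (S1 \<union> S2). j < fst x}"
proof -
  have b1: "a < fst x \<and> snd x < j \<and> fst x < snd x" if "x\<in>S1" for x using ssD[OF assms(2), of "fst x" "snd x"] that assms(1) by auto
  have b2: "j < fst x \<and> fst x < snd x" if "x\<in>S2" for x using ssD[OF assms(3), of "fst x" "snd x"] that by auto
  show "S1 = {x\<in>insert (a,j) (S1 \<union> S2). a < fst x \<and> snd x < j}"
  proof
    show "S1 \<subseteq> {x\<in>insert (a,j) (S1 \<union> S2). a < fst x \<and> snd x < j}" using b1 by blast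
    show "{x\<in>insert (a,j) (S1 \<union> S2). a < fst x \<and> snd x < j} \<subseteq> S1"
    proof
      fix x assume "x \<in> {x\<in>insert (a,j) (S1 \<union> S2). a < fst x \<and> snd x < j}"
      then have "x \<in> insert (a,j) (S1 \<union> S2)" "a < fst x" "snd x < j" by auto
      then show "x \<in> S1" using b2[of x] by auto
    qed
  qed
  show "S2 = {x\<in>insert (a,j) (S1 \<union> S2). j < fst x}"
  proof
    show "S2 \<subseteq> {x\<in>insert (a,j) (S1 \<union> S2). j < fst x}" using b2 by blast
    show "{x\<in>insert (a,j) (S1 \<union> S2). j < fst x} \<subseteq> S2"
    proof
      fix x assume "x \<in> {x\<in>insert (a,j) (S1 \<union> S2). j < fst x}"
      then have "x \<in> insert (a,j) (S1 \<union> S2)" "j < fst x" by auto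
      then show "x \<in> S2" using b1[of x] assms(1) by auto
    qed
  qed
qed

lemma inj_decomp:
  assumes "j = a+m+1" "\<And>S. P1 S \<Longrightarrow> ss (a+1) m S" "\<And>S. P2 S \<Longrightarrow> ss (j+1) k S"
  shows "inj_on (\<lambda>(S1,S2). insert (a,j) (S1 \<union> S2)) ({S1. P1 S1} \<times> {S2. P2 S2})"
proof (rule inj_onI)
  fix x y assume x: "x \<in> {S1. P1 S1} \<times> {S2. P2 S2}" and y: "y \<in> {S1. P1 S1} \<times> {S2. P2 S2}"
    and e: "(\<lambda>(S1,S2). insert (a,j) (S1 \<union> S2)) x = (\<lambda>(S1,S2). insert (a,j) (S1 \<union> S2)) y"
  obtain A B where xAB: "x = (A,B)" by force
  obtain C E where yCE: "y = (C,E)" by force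
  have sA: "ss (a+1) m A" "ss (j+1) k B" using x xAB assms by auto
  have sC: "ss (a+1) m C" "ss (j+1) k E" using y yCE assms by auto
  have e': "insert (a,j) (A \<union> B) = insert (a,j) (C \<union> E)" using e xAB yCE by simp
  have "A = C" using recover(1)[OF assms(1) sA] recover(1)[OF assms(1) sC] e' by simp
  moreover have "B = E" using recover(2)[OF assms(1) sA] recover(2)[OF assms(1) sC] e' by simp
  ultimately show "x = y" using xAB yCE by simp
qed

lemma set_sat_pair:
  assumes m: "1 \<le> m" "m+2 \<le> n" "j = a+m+1"
  shows "{S. sat a n S \<and> (a,j)\<in>S} = (\<lambda>(S1,S2). insert (a,j) (S1 \<union> S2)) ` ({S1. sat (a+1) m S1} \<times> {S2. sat (j+1) (n-m-2) S2})"
proof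
  show "{S. sat a n S \<and> (a,j)\<in>S} \<subseteq> (\<lambda>(S1,S2). insert (a,j) (S1 \<union> S2)) ` ({S1. sat (a+1) m S1} \<times> {S2. sat (j+1) (n-m-2) S2})"
  proof
    fix S assume "S \<in> {S. sat a n S \<and> (a,j)\<in>S}"
    then have h: "sat a n S" "(a,j)\<in>S" by auto
    note d = decomp_fwd[OF m h]
    show "S \<in> (\<lambda>(S1,S2). insert (a,j) (S1 \<union> S2)) ` ({S1. sat (a+1) m S1} \<times> {S2. sat (j+1) (n-m-2) S2})"
      by (rule image_eqI[of _ _ "({x\<in>S. a < fst x \<and> snd x < j}, {x\<in>S. j < fst x})"]) (use d in auto)
  qed
  show "(\<lambda>(S1,S2). insert (a,j) (S1 \<union> S2)) ` ({S1. sat (a+1) m S1} \<times> {S2. sat (j+1) (n-m-2) S2}) \<subseteq> {S. sat a n S \<and> (a,j)\<in>S}"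
    using decomp_bwd[OF m] by auto
qed

lemma set_zs_pair:
  assumes m: "1 \<le> m" "m+2 \<le> n" "j = a+m+1"
  shows "{S. zs a n S \<and> (a,j)\<in>S} = (\<lambda>(S1,S2). insert (a,j) (S1 \<union> S2)) ` ({S1. sat (a+1) m S1} \<times> {S2. zs (j+1) (n-m-2) S2})"
proof
  show "{S. zs a n S \<and> (a,j)\<in>S} \<subseteq> (\<lambda>(S1,S2). insert (a,j) (S1 \<union> S2)) ` ({S1. sat (a+1) m S1} \<times> {S2. zs (j+1) (n-m-2) S2})"
  proof
    fix S assume "S \<in> {S. zs a n S \<and> (a,j)\<in>S}"
    then have h: "sat a n S" "(a,j)\<in>S" "noext a n S" by (auto simp: zs_def)
    note d = decomp_fwd[OF m h(1,2)]
    have "noext (j+1) (n-m-2) {x\<in>S. j < fst x}"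
      using decomp_noext[OF m sat_ss[OF d(2)] sat_ss[OF d(3)]] d(1) h(3) by simp
    then show "S \<in> (\<lambda>(S1,S2). insert (a,j) (S1 \<union> S2)) ` ({S1. sat (a+1) m S1} \<times> {S2. zs (j+1) (n-m-2) S2})"
      by (intro image_eqI[of _ _ "({x\<in>S. a < fst x \<and> snd x < j}, {x\<in>S. j < fst x})"]) (use d in \<open>auto simp: zs_def\<close>)
  qed
  show "(\<lambda>(S1,S2). insert (a,j) (S1 \<union> S2)) ` ({S1. sat (a+1) m S1} \<times> {S2. zs (j+1) (n-m-2) S2}) \<subseteq> {S. zs a n S \<and> (a,j)\<in>S}"
  proof
    fix S assume "S \<in> (\<lambda>(S1,S2). insert (a,j) (S1 \<union> S2)) ` ({S1. sat (a+1) m S1} \<times> {S2. zs (j+1) (n-m-2) S2})"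
    then obtain S1 S2 where e: "S = insert (a,j) (S1 \<union> S2)" "sat (a+1) m S1" "zs (j+1) (n-m-2) S2" by auto
    have "sat a n S" using decomp_bwd[OF m e(2)] e by (simp add: zs_def)
    moreover have "noext a n S" using decomp_noext[OF m sat_ss[OF e(2)]] e by (simp add: zs_def sat_iff)
    ultimately show "S \<in> {S. zs a n S \<and> (a,j)\<in>S}" using e(1) by (simp add: zs_def)
  qed
qed

lemma card_sat_pair:
  assumes m: "1 \<le> m" "m+2 \<le> n"
  shows "card {S. sat a n S \<and> (a,a+m+1)\<in>S} = Hc (a+1) m * Hc (a+m+2) (n-m-2)"
proof -
  have i: "inj_on (\<lambda>(S1,S2). insert (a,a+m+1) (S1 \<union> S2)) ({S1. sat (a+1) m S1} \<times> {S2. sat (a+m+1+1) (n-m-2) S2})"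
    by (rule inj_decomp) (auto simp: sat_iff)
  show ?thesis unfolding set_sat_pair[OF m refl] card_image[OF i] card_cartesian_product Hc_def
    by simp
qed

lemma card_zs_pair:
  assumes m: "1 \<le> m" "m+2 \<le> n"
  shows "card {S. zs a n S \<and> (a,a+m+1)\<in>S} = Hc (a+1) m * Zc (a+m+2) (n-m-2)"
proof -
  have i: "inj_on (\<lambda>(S1,S2). insert (a,a+m+1) (S1 \<union> S2)) ({S1. sat (a+1) m S1} \<times> {S2. zs (a+m+1+1) (n-m-2) S2})"
    by (rule inj_decomp) (auto simp: sat_iff zs_def)
  show ?thesis unfolding set_zs_pair[OF m refl] card_image[OF i] card_cartesian_product Hc_def Zc_def
    by simp
qed



lemma nonfree_first:
  assumes s: "ss a n S" and nf: "\<not> freeS S a"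
  obtains m where "1 \<le> m" "m+2 \<le> n" "(a,a+m+1)\<in>S"
proof -
  obtain p q where pq: "(p,q)\<in>S" "p = a \<or> q = a" using nf unfolding freeS_def by auto
  have b: "a \<le> p" "p+1<q" "q<a+n" using ssD[OF s pq(1)] by auto
  then have "p = a" using pq(2) by auto
  then have "(a, a+(q-a-1)+1)\<in>S" using pq(1) b by simp
  moreover have "1 \<le> q-a-1" "(q-a-1)+2 \<le> n" using b \<open>p=a\<close> by auto
  ultimately show ?thesis using that by blast
qed

lemma sat_partition:
  assumes n: "2 \<le> n"
  shows "{S. sat a n S} = {S. zs (a+1) (n-1) S} \<union> {S. zs (a+2) (n-2) S} \<union> (\<Union>m\<in>{1..n-2}. {S. sat a n S \<and> (a,a+m+1)\<in>S})"
proof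
  show "{S. sat a n S} \<subseteq> {S. zs (a+1) (n-1) S} \<union> {S. zs (a+2) (n-2) S} \<union> (\<Union>m\<in>{1..n-2}. {S. sat a n S \<and> (a,a+m+1)\<in>S})"
  proof
    fix S assume "S \<in> {S. sat a n S}"
    then have h: "sat a n S" by simp
    show "S \<in> {S. zs (a+1) (n-1) S} \<union> {S. zs (a+2) (n-2) S} \<union> (\<Union>m\<in>{1..n-2}. {S. sat a n S \<and> (a,a+m+1)\<in>S})"
    proof (cases "freeS S a")
      case True
      then show ?thesis using freeA[OF n, of a S] freeB[OF n, of a S] h by (cases "freeS S (a+1)") auto
    next
      case False
      then obtain m where "1 \<le> m" "m+2 \<le> n" "(a,a+m+1)\<in>S" using nonfree_first[OF sat_ss[OF h]] by blast
      then show ?thesis using h by auto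
    qed
  qed
  show "{S. zs (a+1) (n-1) S} \<union> {S. zs (a+2) (n-2) S} \<union> (\<Union>m\<in>{1..n-2}. {S. sat a n S \<and> (a,a+m+1)\<in>S}) \<subseteq> {S. sat a n S}"
    using freeA[OF n, of a] freeB[OF n, of a] by blast
qed

lemma zs_partition:
  assumes n: "1 \<le> n"
  shows "{S. zs a n S} = (\<Union>m\<in>{1..n-2}. {S. zs a n S \<and> (a,a+m+1)\<in>S})"
proof
  show "{S. zs a n S} \<subseteq> (\<Union>m\<in>{1..n-2}. {S. zs a n S \<and> (a,a+m+1)\<in>S})"
  proof
    fix S assume "S \<in> {S. zs a n S}"
    then have h: "zs a n S" by simp
    have "\<not> freeS S a"
    proof
      assume "freeS S a"
      then have "cov S a" using noextD[of a n S a] h n unfolding zs_def by auto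
      then obtain p q where "(p,q)\<in>S" "p<a" by (rule covE)
      then show False using ssD[OF sat_ss, of a n S p q] h unfolding zs_def by auto
    qed
    then obtain m where "1 \<le> m" "m+2 \<le> n" "(a,a+m+1)\<in>S" using nonfree_first[OF sat_ss, of a n S] h unfolding zs_def by blast
    then show "S \<in> (\<Union>m\<in>{1..n-2}. {S. zs a n S \<and> (a,a+m+1)\<in>S})" using h by auto
  qed
qed auto

lemma pair_disj:
  assumes "sat a n S" "(a,a+m+1)\<in>S" "(a,a+m'+1)\<in>S" shows "m = m'"
  using ss_disj[OF sat_ss[OF assms(1)] assms(2) assms(3)] by auto

lemma Hc_rec:
  assumes n: "2 \<le> n"
  shows "Hc a n = Zc (a+1) (n-1) + Zc (a+2) (n-2) + (\<Sum>m\<in>{1..n-2}. Hc (a+1) m * Hc (a+m+2) (n-m-2))"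
proof -
  let ?A = "{S. zs (a+1) (n-1) S}" and ?B = "{S. zs (a+2) (n-2) S}"
  let ?C = "\<lambda>m. {S. sat a n S \<and> (a,a+m+1)\<in>S}"
  have fC: "finite (?C m)" for m by (rule fin_sat2)
  have fU: "finite (\<Union>m\<in>{1..n-2}. ?C m)" using fC by auto
  have dC: "card (\<Union>m\<in>{1..n-2}. ?C m) = (\<Sum>m\<in>{1..n-2}. card (?C m))"
  proof (rule card_UN_disjoint)
    show "\<forall>i\<in>{1..n-2}. \<forall>j\<in>{1..n-2}. i \<noteq> j \<longrightarrow> ?C i \<inter> ?C j = {}"
      using pair_disj by blast
  qed (use fC in auto)
  have AB: "?A \<inter> ?B = {}" using freeA[OF n, of a] freeB[OF n, of a] by blast
  have ABC: "(?A \<union> ?B) \<inter> (\<Union>m\<in>{1..n-2}. ?C m) = {}"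
  proof -
    have "freeS S a" if "S \<in> ?A \<union> ?B" for S using that freeA[OF n, of a S] freeB[OF n, of a S] by blast
    moreover have "\<not> freeS S a" if "S \<in> (\<Union>m\<in>{1..n-2}. ?C m)" for S
      using that freeD[of S a a] by blast
    ultimately show ?thesis by blast
  qed
  have "Hc a n = card (?A \<union> ?B \<union> (\<Union>m\<in>{1..n-2}. ?C m))" unfolding Hc_def sat_partition[OF n] ..
  also have "\<dots> = card (?A \<union> ?B) + card (\<Union>m\<in>{1..n-2}. ?C m)"
    by (rule card_Un_disjoint) (use fin_zs fU ABC in auto)
  also have "card (?A \<union> ?B) = card ?A + card ?B"
    by (rule card_Un_disjoint) (use fin_zs AB in auto)
  also have "card (\<Union>m\<in>{1..n-2}. ?C m) = (\<Sum>m\<in>{1..n-2}. Hc (a+1) m * Hc (a+m+2) (n-m-2))"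
    unfolding dC by (rule sum.cong) (use card_sat_pair in auto)
  finally show ?thesis unfolding Zc_def by simp
qed

lemma Zc_rec:
  assumes n: "1 \<le> n"
  shows "Zc a n = (\<Sum>m\<in>{1..n-2}. Hc (a+1) m * Zc (a+m+2) (n-m-2))"
proof -
  let ?C = "\<lambda>m. {S. zs a n S \<and> (a,a+m+1)\<in>S}"
  have fC: "finite (?C m)" for m by (rule finite_subset[OF _ fin_zs]) auto
  have dC: "card (\<Union>m\<in>{1..n-2}. ?C m) = (\<Sum>m\<in>{1..n-2}. card (?C m))"
  proof (rule card_UN_disjoint)
    show "\<forall>i\<in>{1..n-2}. \<forall>j\<in>{1..n-2}. i \<noteq> j \<longrightarrow> ?C i \<inter> ?C j = {}"
      using pair_disj unfolding zs_def by blast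
  qed (use fC in auto)
  have "Zc a n = card (\<Union>m\<in>{1..n-2}. ?C m)" unfolding Zc_def zs_partition[OF n] ..
  also have "\<dots> = (\<Sum>m\<in>{1..n-2}. Hc (a+1) m * Zc (a+m+2) (n-m-2))"
    unfolding dC by (rule sum.cong) (use card_zs_pair in auto)
  finally show ?thesis .
qed

lemma sat_small: "n \<le> 1 \<Longrightarrow> sat a n S \<longleftrightarrow> S = {}"
proof
  assume "n \<le> 1" "sat a n S"
  then show "S = {}" using ssD[OF sat_ss, of a n S] by fastforce
next
  assume "n \<le> 1" "S = {}"
  moreover have "ss a n {}" by (rule ssI) auto
  ultimately show "sat a n S" by (auto intro!: satI)
qed

lemma zs0: "zs a 0 S \<longleftrightarrow> S = {}"
  unfolding zs_def noext_def using sat_small[of 0 a S] by auto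

lemma Hc_small: assumes "n \<le> 1" shows "Hc a n = 1"
proof -
  have "{S. sat a n S} = {{}}" using sat_small[OF assms] by auto
  then show ?thesis unfolding Hc_def by simp
qed

lemma Zc0: "Zc a 0 = 1"
proof -
  have "{S. zs a 0 S} = {{}}" using zs0 by auto
  then show ?thesis unfolding Zc_def by simp
qed

lemma invariance: "Hc a n = Hc 0 n \<and> Zc a n = Zc 0 n"
proof (induction n arbitrary: a rule: less_induct)
  case (less n)
  show ?case
  proof (cases "n \<le> 1")
    case True
    have "Zc a n = Zc 0 n"
    proof (cases "n = 0")
      case True then show ?thesis by (simp add: Zc0)
    next
      case False then have "n = 1" using True by simp
      then show ?thesis using Zc_rec[of n a] Zc_rec[of n 0] by simp
    qed
    then show ?thesis using Hc_small[OF True] by simp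
  next
    case False
    then have n: "2 \<le> n" "1 \<le> n" by auto
    have "Hc a n = Hc 0 n"
      unfolding Hc_rec[OF n(1), of a] Hc_rec[OF n(1), of 0]
    proof -
      have s: "(\<Sum>m\<in>{1..n-2}. Hc (a+1) m * Hc (a+m+2) (n-m-2)) = (\<Sum>m\<in>{1..n-2}. Hc (0+1) m * Hc (0+m+2) (n-m-2))"
      proof (rule sum.cong)
        fix m assume "m \<in> {1..n-2}"
        then have "m < n" "n-m-2 < n" using n by auto
        then show "Hc (a+1) m * Hc (a+m+2) (n-m-2) = Hc (0+1) m * Hc (0+m+2) (n-m-2)"
          using less.IH[of m "a+1"] less.IH[of m 1] less.IH[of "n-m-2" "a+m+2"] less.IH[of "n-m-2" "m+2"] by simp
      qed simp
      have "n-1 < n" "n-2 < n" using n by auto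
      then show "Zc (a+1) (n-1) + Zc (a+2) (n-2) + (\<Sum>m\<in>{1..n-2}. Hc (a+1) m * Hc (a+m+2) (n-m-2)) =
        Zc (0+1) (n-1) + Zc (0+2) (n-2) + (\<Sum>m\<in>{1..n-2}. Hc (0+1) m * Hc (0+m+2) (n-m-2))"
      proof -
        have e1: "Zc (a+1) (n-1) = Zc (0+1) (n-1)" using less.IH[of "n-1" "a+1"] less.IH[of "n-1" "0+1"] \<open>n-1<n\<close> by metis
        have e2: "Zc (a+2) (n-2) = Zc (0+2) (n-2)" using less.IH[of "n-2" "a+2"] less.IH[of "n-2" "0+2"] \<open>n-2<n\<close> by metis
        show ?thesis using s e1 e2 by argo
      qed
    qed
    moreover have "Zc a n = Zc 0 n"
      unfolding Zc_rec[OF n(2), of a] Zc_rec[OF n(2), of 0]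
    proof (rule sum.cong)
      fix m assume "m \<in> {1..n-2}"
      then have "m < n" "n-m-2 < n" using n by auto
      then show "Hc (a+1) m * Zc (a+m+2) (n-m-2) = Hc (0+1) m * Zc (0+m+2) (n-m-2)"
        using less.IH[of m "a+1"] less.IH[of m 1] less.IH[of "n-m-2" "a+m+2"] less.IH[of "n-m-2" "m+2"] by simp
    qed simp
    ultimately show ?thesis by simp
  qed
qed

lemma Hc_inv: "a \<noteq> 0 \<Longrightarrow> Hc a n = Hc 0 n" using invariance by blast
lemma Zc_inv: "a \<noteq> 0 \<Longrightarrow> Zc a n = Zc 0 n" using invariance by blast

definition hh :: "nat \<Rightarrow> nat" where "hh n = Hc 0 n"
definition zz :: "nat \<Rightarrow> nat" where "zz n = Zc 0 n"

lemma hh_rec: "2 \<le> n \<Longrightarrow> hh n = zz (n-1) + zz (n-2) + (\<Sum>m\<in>{1..n-2}. hh m * hh (n-m-2))"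
  unfolding hh_def zz_def using Hc_rec[of n 0] by (simp add: Hc_inv Zc_inv)

lemma zz_rec: "1 \<le> n \<Longrightarrow> zz n = (\<Sum>m\<in>{1..n-2}. hh m * zz (n-m-2))"
  unfolding hh_def zz_def using Zc_rec[of n 0] by (simp add: Hc_inv Zc_inv)

lemma hh01: "hh 0 = 1" "hh 1 = 1" unfolding hh_def by (simp_all add: Hc_small)
lemma zz0: "zz 0 = 1" unfolding zz_def by (simp add: Zc0)

lemma num_sat_hh: "num_saturated n = hh n"
  unfolding num_saturated_def hh_def saturated_sat using invariance[of 1 n] by (simp add: Hc_def)




definition Zf :: "int fps" where "Zf = Abs_fps (\<lambda>n. int (zz n))"

lemma Sg_nth: "sat_gf $ i = (if i = 0 then 0 else int (hh i))"
  unfolding sat_gf_def by (simp add: num_sat_hh)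

lemma Hf_nth: "(1 + sat_gf) $ i = int (hh i)"
  by (simp add: Sg_nth hh01)

lemma Sg_conv: "(sat_gf * G) $ k = (\<Sum>i=1..k. int (hh i) * G $ (k - i))"
proof -
  have "(sat_gf * G) $ k = (\<Sum>i=0..k. sat_gf $ i * G $ (k - i))" by (rule fps_mult_nth)
  also have "\<dots> = sat_gf $ 0 * G $ (k - 0) + (\<Sum>i=Suc 0..k. sat_gf $ i * G $ (k - i))"
    by (rule sum.atLeast_Suc_atMost) simp
  also have "\<dots> = (\<Sum>i=1..k. int (hh i) * G $ (k - i))"
    by (simp add: Sg_nth)
  finally show ?thesis .
qed

lemma zz1: "zz 1 = 0" "zz (Suc 0) = 0" using zz_rec[of 1] by simp_all
lemma hh1: "hh (Suc 0) = 1" using hh01 by simp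

lemma C1: "Zf = 1 + fps_X^2 * (sat_gf * Zf)"
proof (rule fps_ext)
  fix n
  show "Zf $ n = (1 + fps_X^2 * (sat_gf * Zf)) $ n"
  proof (cases "n < 2")
    case True
    then have "n = 0 \<or> n = 1" by auto
    then show ?thesis by (auto simp: Zf_def zz0 zz1 fps_X_power_mult_nth)
  next
    case False
    then have n: "2 \<le> n" "1 \<le> n" by auto
    have "(1 + fps_X^2 * (sat_gf * Zf)) $ n = (\<Sum>i=1..n-2. int (hh i) * int (zz (n - 2 - i)))"
      using n by (simp add: fps_X_power_mult_nth Sg_conv Zf_def)
    also have "\<dots> = int (\<Sum>m\<in>{1..n-2}. hh m * zz (n-m-2))"
      by (simp add: of_nat_sum algebra_simps diff_diff_eq add.commute)
    also have "\<dots> = Zf $ n" using zz_rec[OF n(2)] by (simp add: Zf_def)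
    finally show ?thesis by simp
  qed
qed

lemma SgH: "(sat_gf * (1 + sat_gf)) $ k = (\<Sum>i=1..k. int (hh i) * int (hh (k - i)))"
  by (simp only: Sg_conv Hf_nth)

lemma C2: "1 + sat_gf = 1 + fps_X^2 * (sat_gf * (1 + sat_gf)) + (fps_X + fps_X^2) * Zf"
proof (rule fps_ext)
  fix n
  show "(1 + sat_gf) $ n = (1 + fps_X^2 * (sat_gf * (1 + sat_gf)) + (fps_X + fps_X^2) * Zf) $ n"
  proof (cases "n < 2")
    case True
    then have "n = 0 \<or> n = 1" by auto
    then show ?thesis by (auto simp: Zf_def zz0 hh01 hh1 Sg_nth Hf_nth fps_X_power_mult_nth distrib_right)
  next
    case False
    then have n: "2 \<le> n" "1 \<le> n" by auto
    have "(1 + fps_X^2 * (sat_gf * (1 + sat_gf)) + (fps_X + fps_X^2) * Zf) $ n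
       = (\<Sum>i=1..n-2. int (hh i) * int (hh (n - 2 - i))) + int (zz (n-1)) + int (zz (n-2))"
      using n by (simp add: fps_X_power_mult_nth SgH Zf_def distrib_right)
    also have "\<dots> = int (zz (n-1) + zz (n-2) + (\<Sum>m\<in>{1..n-2}. hh m * hh (n-m-2)))"
      by (simp add: of_nat_sum algebra_simps diff_diff_eq add.commute)
    also have "\<dots> = int (hh n)" using hh_rec[OF n(1)] by simp
    also have "\<dots> = (1 + sat_gf) $ n" by (rule Hf_nth[symmetric])
    finally show ?thesis by simp
  qed
qed

theorem mainTheorem5:
  shows "- (sat_gf ^ 3 * fps_X ^ 4) + fps_X * (1 + fps_X)
           - sat_gf ^ 2 * fps_X ^ 2 * (fps_X ^ 2 - 2)
           + sat_gf * (fps_X ^ 2 - 1) = 0"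
proof -
  define A :: "int fps" where "A = fps_X^2 * sat_gf"
  have z: "Zf * (1 - A) = 1" using C1 unfolding A_def by algebra
  have h: "(1 + sat_gf) * (1 - A) = 1 + (fps_X + fps_X^2) * Zf" using C2 unfolding A_def by algebra
  have e: "(1 + sat_gf) * (1 - A)^2 = (1 - A) + (fps_X + fps_X^2)"
  proof -
    have "(1 + sat_gf) * (1 - A)^2 = ((1 + sat_gf) * (1 - A)) * (1 - A)" by (simp add: power2_eq_square algebra_simps)
    also have "\<dots> = (1 - A) + (fps_X + fps_X^2) * (Zf * (1 - A))" unfolding h by (simp add: algebra_simps)
    also have "\<dots> = (1 - A) + (fps_X + fps_X^2)" using z by simp
    finally show ?thesis .
  qed
  show ?thesis using e unfolding A_def by algebra
qed

end
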